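(* Let $(\mathcal Q,d)$ be a Hadamard space, let $Y$ be a $\mathcal Q$-valued random variable, let $o\in\mathcal Q$, and let $\tau\in\mathcal S_0^+$. Assume $\mathbb E[\tau'(d(Y,o))]<\infty$. Let $m\in\arg\min_{q\in\mathcal Q}\mathbb E[\tau(d(Y,q))-\tau(d(Y,o))]$ and let $q\in\mathcal Q\setminus\{m\}$. Then $$\mathbb E\big[\tau(d(Y,q))-\tau(d(Y,m))\big]\ \ge\ \tfrac12\, d(q,m)^2\,\mathbb E\Big[\tau'^{\oplus}\big(\max(d(Y,m),d(Y,q))\big)\Big].$$
   Context: $\mathcal S$ denotes the set of nondecreasing convex functions $\tau:[0,\infty)\to\mathbb R$ that are differentiable on $(0,\infty)$ with concave derivative $\tau'$; one sets $\tau'(0):=\lim_{x\searrow0}\tau'(x)$. $\mathcal S_0^+$ is the set of $\tau\in\mathcal S$ with $\tau(0)=0$ and $\tau'(x)>0$ for all $x>0$. For a real function $g$, $g^{\oplus}$ and $g^{\ominus}$ denote its right and left derivatives; $\tau'^{\oplus}$ is the right derivative of $\tau'$ (it exists on $(0,\infty)$, is nonnegative and nonincreasing). A metric space $(\mathcal Q,d)$ is a Hadamard space if it is complete and for all $y_0,y_1\in\mathcal Q$ there exists $m\in\mathcal Q$ with $\frac12 d(y_0,q)^2+\frac12 d(y_1,q)^2-\frac14 d(y_0,y_1)^2\ge d(q,m)^2$ for all $q\in\mathcal Q$ (equivalently, a complete CAT(0) space). $\mathcal Q$ carries its Borel $\sigma$-algebra and $Y$ is a measurable map from a probability space into $\mathcal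 Q$. *)

theory Defs
  imports "HOL-Probability.Probability"
begin

text \<open>Hadamard space: complete metric space with the midpoint (CAT(0)) inequality.
  The metric space is the ambient type, with its metric topology and Borel sigma-algebra.\<close>
definition hadamard_space :: "'a::metric_space itself \<Rightarrow> bool" where
  "hadamard_space _ \<longleftrightarrow> Topological_Spaces.complete (UNIV :: 'a set) \<and>
     (\<forall>y0 y1 :: 'a. \<exists>m. \<forall>q.
        (1/2) * (dist y0 q)\<^sup>2 + (1/2) * (dist y1 q)\<^sup>2 - (1/4) * (dist y0 y1)\<^sup>2 \<ge> (dist q m)\<^sup>2)"

definition tau_deriv :: "(real \<Rightarrow> real) \<Rightarrow> real \<Rightarrow> real" where
  "tau_deriv \<tau> x = (if x > 0 then deriv \<tau> x else Lim (at_right 0) (deriv \<tau>))"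

definition right_deriv :: "(real \<Rightarrow> real) \<Rightarrow> real \<Rightarrow> real" where
  "right_deriv g x = Lim (at_right 0) (\<lambda>h. (g (x + h) - g x) / h)"

definition class_S :: "(real \<Rightarrow> real) \<Rightarrow> bool" where
  "class_S \<tau> \<longleftrightarrow> mono_on {0..} \<tau> \<and> convex_on {0..} \<tau> \<and>
     (\<forall>x>0. \<tau> differentiable (at x)) \<and> concave_on {0<..} (deriv \<tau>)"

definition class_S0plus :: "(real \<Rightarrow> real) \<Rightarrow> bool" where
  "class_S0plus \<tau> \<longleftrightarrow> class_S \<tau> \<and> \<tau> 0 = 0 \<and> (\<forall>x>0. tau_deriv \<tau> x > 0)"

end

theory Submission
  imports Defs
begin


lemma conc_slope:
  fixes g :: "real \<Rightarrow> real"
  assumes "concave_on I g" "u \<in> I" "w \<in> I" "u < v" "v < w"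
  shows "(g w - g u)/(w - u) \<le> (g v - g u)/(v - u)"
    and "(g w - g v)/(w - v) \<le> (g w - g u)/(w - u)"
    and "(g w - g v)/(w - v) \<le> (g v - g u)/(v - u)"
proof -
  have c: "convex_on I (\<lambda>x. - g x)" using assms(1) by (simp add: concave_on_def)
  note s = convex_on_slope_le[OF c assms(2,3,4,5)]
  have e1: "(- g u - - g v) / (u - v) = - ((g v - g u)/(v - u))"
    using assms by (simp add: divide_simps) (simp add: algebra_simps)
  have e2: "(- g u - - g w) / (u - w) = - ((g w - g u)/(w - u))"
    using assms by (simp add: divide_simps) (simp add: algebra_simps)
  have e3: "(- g v - - g w) / (v - w) = - ((g w - g v)/(w - v))"
    using assms by (simp add: divide_simps) (simp add: algebra_simps)
  show 1: "(g w - g u)/(w - u) \<le> (g v - g u)/(v - u)" using s(1) e1 e2 by simp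
  show 2: "(g w - g v)/(w - v) \<le> (g w - g u)/(w - u)" using s(2) e2 e3 by simp
  show "(g w - g v)/(w - v) \<le> (g v - g u)/(v - u)" using 1 2 by simp
qed

lemma rd_props:
  fixes g :: "real \<Rightarrow> real"
  assumes conc: "concave_on {0<..} g" and mono: "\<And>x y. 0<x \<Longrightarrow> x\<le>y \<Longrightarrow> g x \<le> g y"
    and M: "M > 0"
  shows "0 \<le> right_deriv g M"
    and "\<And>x y. 0<x \<Longrightarrow> x<y \<Longrightarrow> y\<le>M \<Longrightarrow> right_deriv g M * (y - x) \<le> g y - g x"
proof -
  define Q where "Q = (\<lambda>h. (g (M + h) - g M) / h)"
  have Qmono: "Q h2 \<le> Q h1" if "0 < h1" "h1 \<le> h2" for h1 h2
  proof (cases "h1 = h2")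
    case False
    then have "h1 < h2" using that by simp
    from conc_slope(1)[OF conc, of M "M+h2" "M+h1"] this that M
    show ?thesis by (simp add: Q_def)
  qed simp
  have Qnn: "0 \<le> Q h" if "h > 0" for h
    using mono[of M "M+h"] M that by (simp add: Q_def)
  have Qb: "Q h \<le> (g y - g x)/(y - x)" if "h > 0" "0<x" "x<y" "y\<le>M" for h x y
  proof -
    have a: "(g (M+h) - g y)/((M+h) - y) \<le> (g y - g x)/(y - x)"
      using conc_slope(3)[OF conc, of x "M+h" y] that by simp
    show ?thesis
    proof (cases "y = M")
      case True then show ?thesis using a by (simp add: Q_def)
    next
      case False
      then have "y < M" using that by simp
      then have "(g (M+h) - g M)/((M+h) - M) \<le> (g (M+h) - g y)/((M+h) - y)"
        using conc_slope(2)[OF conc, of y "M+h" M] that by simp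
      then show ?thesis using a by (simp add: Q_def)
    qed
  qed
  define L where "L = Sup (Q ` {0<..})"
  have bdd: "bdd_above (Q ` {0<..})"
    using Qb[of _ "M/2" M] M by (intro bdd_aboveI[where M = "(g M - g (M/2))/(M - M/2)"]) auto
  have QL: "Q h \<le> L" if "h > 0" for h
    unfolding L_def using bdd that by (intro cSup_upper) auto
  have lim: "(Q \<longlongrightarrow> L) (at_right 0)"
  proof (rule tendstoI)
    fix e :: real assume e: "e > 0"
    have "L - e < L" using e by simp
    then obtain h0 where h0: "h0 \<in> {0<..}" "L - e < Q h0"
      unfolding L_def by (subst (asm) less_cSup_iff) (use bdd in auto)
    show "eventually (\<lambda>h. dist (Q h) L < e) (at_right 0)"
      unfolding eventually_at_right_field
    proof (intro exI[of _ h0] conjI allI impI)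
      show "h0 > 0" using h0 by simp
      fix h :: real assume "0 < h" "h < h0"
      then have "Q h0 \<le> Q h" "Q h \<le> L" using Qmono QL by auto
      then show "dist (Q h) L < e" using h0 by (simp add: dist_real_def)
    qed
  qed
  have rd: "right_deriv g M = L"
    unfolding right_deriv_def using lim by (intro tendsto_Lim) (auto simp: Q_def)
  show "0 \<le> right_deriv g M" using rd QL[of 1] Qnn[of 1] by simp
  fix x y assume xy: "0<x" "x<y" "y\<le>M"
  have "L \<le> (g y - g x)/(y - x)"
    unfolding L_def by (rule cSup_least) (use Qb xy in auto)
  then show "right_deriv g M * (y - x) \<le> g y - g x"
    using rd xy by (simp add: pos_le_divide_eq)
qed

lemma convex_on_Icc_derivI:
  fixes f f' :: "real \<Rightarrow> real"
  assumes cont: "continuous_on {a..b} f"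
    and der: "\<And>x. a<x \<Longrightarrow> x<b \<Longrightarrow> (f has_real_derivative f' x) (at x)"
    and mono: "\<And>x y. a<x \<Longrightarrow> x\<le>y \<Longrightarrow> y<b \<Longrightarrow> f' x \<le> f' y"
  shows "convex_on {a..b} f"
proof (rule convex_on_linorderI)
  show "convex {a..b}" by simp
next
  fix t x y :: real
  assume t: "t > 0" "t < 1"
  assume xy: "x \<in> {a..b}" "y \<in> {a..b}" "x < y"
  define z where "z = (1 - t) * x + t * y"
  from xy t have xz: "z > x"
    by (simp add: z_def algebra_simps)
  have "y - z = (1 - t) * (y - x)"
    by (simp add: z_def algebra_simps)
  also from xy t have "\<dots> > 0"
    by (intro mult_pos_pos) simp_all
  finally have yz: "z < y"
    by simp
  have c1: "continuous_on {x..z} f" by (rule continuous_on_subset[OF cont]) (use xy yz in auto)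
  have c2: "continuous_on {z..y} f" by (rule continuous_on_subset[OF cont]) (use xy xz in auto)
  have dif: "\<And>u. a<u \<Longrightarrow> u<b \<Longrightarrow> f differentiable (at u)"
    using der real_differentiable_def by blast
  have d1: "\<And>u. x<u \<Longrightarrow> u<z \<Longrightarrow> f differentiable (at u)"
    using dif xy yz by auto
  have d2: "\<And>u. z<u \<Longrightarrow> u<y \<Longrightarrow> f differentiable (at u)"
    using dif xy xz by auto
  obtain l \<xi> where \<xi>: "x < \<xi>" "\<xi> < z" "DERIV f \<xi> :> l" "f z - f x = (z - x) * l"
    using MVT[OF xz c1 d1] by blast
  have l: "l = f' \<xi>" using DERIV_unique[OF \<xi>(3) der[of \<xi>]] \<xi> xy yz by auto
  obtain l2 \<eta> where \<eta>: "z < \<eta>" "\<eta> < y" "DERIV f \<eta> :> l2" "f y - f z = (y - z) * l2"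
    using MVT[OF yz c2 d2] by blast
  have l2: "l2 = f' \<eta>" using DERIV_unique[OF \<eta>(3) der[of \<eta>]] \<eta> xy xz by auto
  have "f' \<xi> \<le> f' \<eta>" using mono[of \<xi> \<eta>] \<xi> \<eta> xy by auto
  then have le: "((z-x)*(y-z)) * f' \<xi> \<le> ((z-x)*(y-z)) * f' \<eta>"
    using xz yz by (intro mult_left_mono) auto
  have eq1: "(f y - f z) * (z - x) = ((z-x)*(y-z)) * f' \<eta>" using \<eta>(4) l2 by simp
  have eq2: "(f z - f x) * (y - z) = ((z-x)*(y-z)) * f' \<xi>" using \<xi>(4) l by simp
  have "(f y - f z) * (z - x) \<ge> (f z - f x) * (y - z)" unfolding eq1 eq2 by (rule le)
  also have "z - x = t * (y - x)"
    by (simp add: z_def algebra_simps)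
  also have "y - z = (1 - t) * (y - x)"
    by (simp add: z_def algebra_simps)
  finally have "(f y - f z) * t \<ge> (f z - f x) * (1 - t)"
    using xy by simp
  then show "(1 - t) * f x + t * f y \<ge> f ((1 - t) *\<^sub>R x + t *\<^sub>R y)"
    by (simp add: z_def algebra_simps)
qed

lemma concave_on_cong':
  assumes "concave_on S f" "\<And>x. x \<in> S \<Longrightarrow> f x = g x"
  shows "concave_on S g"
proof -
  have cs: "convex S" using assms(1) by (simp add: concave_on_def convex_on_def)
  have c2: "\<forall>x\<in>S. \<forall>y\<in>S. \<forall>u\<ge>0. \<forall>v\<ge>0. u + v = 1 \<longrightarrow> - f (u *\<^sub>R x + v *\<^sub>R y) \<le> u * (- f x) + v * (- f y)"
    using assms(1) unfolding concave_on_def convex_on_def by blast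
  have "\<forall>x\<in>S. \<forall>y\<in>S. \<forall>u\<ge>0. \<forall>v\<ge>0. u + v = 1 \<longrightarrow> - g (u *\<^sub>R x + v *\<^sub>R y) \<le> u * (- g x) + v * (- g y)"
  proof (intro ballI allI impI)
    fix x y u v assume h: "x \<in> S" "y \<in> S" "0 \<le> (u::real)" "0 \<le> (v::real)" "u + v = 1"
    then have m: "u *\<^sub>R x + v *\<^sub>R y \<in> S" using cs convexD by blast
    have "- f (u *\<^sub>R x + v *\<^sub>R y) \<le> u * (- f x) + v * (- f y)" using c2 h by blast
    then show "- g (u *\<^sub>R x + v *\<^sub>R y) \<le> u * (- g x) + v * (- g y)"
      using assms(2)[OF m] assms(2)[OF h(1)] assms(2)[OF h(2)] by simp
  qed
  then show ?thesis using cs unfolding concave_on_def convex_on_def by blast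
qed

lemma tau_facts:
  fixes \<tau> :: "real \<Rightarrow> real"
  assumes S: "class_S0plus \<tau>"
  shows tf_der: "\<And>x. 0<x \<Longrightarrow> (\<tau> has_real_derivative deriv \<tau> x) (at x)"
    and tf_td: "\<And>x. 0<x \<Longrightarrow> tau_deriv \<tau> x = deriv \<tau> x"
    and tf_pos: "\<And>x. 0<x \<Longrightarrow> deriv \<tau> x > 0"
    and tf_zero: "\<tau> 0 = 0"
    and tf_mono: "\<And>x y. 0 \<le> x \<Longrightarrow> x \<le> y \<Longrightarrow> \<tau> x \<le> \<tau> y"
    and tf_conv: "convex_on {0..} \<tau>"
    and tf_tan: "\<And>x z. 0<x \<Longrightarrow> 0 \<le> z \<Longrightarrow> deriv \<tau> x * (z - x) \<le> \<tau> z - \<tau> x"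
    and tf_dmono: "\<And>x y. 0<x \<Longrightarrow> x \<le> y \<Longrightarrow> deriv \<tau> x \<le> deriv \<tau> y"
    and tf_conc: "concave_on {0<..} (deriv \<tau>)"
    and tf_conc2: "concave_on {0<..} (tau_deriv \<tau>)"
    and tf_cont: "\<And>M. continuous_on {0..M} \<tau>"
proof -
  show der: "\<And>x. 0<x \<Longrightarrow> (\<tau> has_real_derivative deriv \<tau> x) (at x)"
    using S unfolding class_S0plus_def class_S_def
    by (simp add: DERIV_deriv_iff_real_differentiable)
  show td: "\<And>x. 0<x \<Longrightarrow> tau_deriv \<tau> x = deriv \<tau> x" by (simp add: tau_deriv_def)
  show "\<And>x. 0<x \<Longrightarrow> deriv \<tau> x > 0" using S td unfolding class_S0plus_def by auto
  show z: "\<tau> 0 = 0" using S unfolding class_S0plus_def by auto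
  show mono: "\<And>x y. 0 \<le> x \<Longrightarrow> x \<le> y \<Longrightarrow> \<tau> x \<le> \<tau> y"
    using S unfolding class_S0plus_def class_S_def mono_on_def by auto
  show conv: "convex_on {0..} \<tau>" using S unfolding class_S0plus_def class_S_def by auto
  show tan: "\<And>x z. 0<x \<Longrightarrow> 0 \<le> z \<Longrightarrow> deriv \<tau> x * (z - x) \<le> \<tau> z - \<tau> x"
  proof -
    fix x z :: real assume "0 < x" "0 \<le> z"
    then show "deriv \<tau> x * (z - x) \<le> \<tau> z - \<tau> x"
      by (intro convex_on_imp_above_tangent[OF conv]) 
        (auto intro: has_field_derivative_at_within der simp: interior_Ici is_interval_connected)
  qed
  show "\<And>x y. 0<x \<Longrightarrow> x \<le> y \<Longrightarrow> deriv \<tau> x \<le> deriv \<tau> y"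
  proof -
    fix x y :: real assume xy: "0<x" "x \<le> y"
    have "deriv \<tau> x * (y - x) \<le> \<tau> y - \<tau> x" using tan xy by auto
    moreover have "deriv \<tau> y * (x - y) \<le> \<tau> x - \<tau> y" using tan xy by auto
    ultimately have "deriv \<tau> x * (y - x) \<le> deriv \<tau> y * (y - x)" by (simp add: algebra_simps)
    then show "deriv \<tau> x \<le> deriv \<tau> y"
      using xy by (cases "x = y") (auto simp: mult_le_cancel_right)
  qed
  show c1: "concave_on {0<..} (deriv \<tau>)" using S unfolding class_S0plus_def class_S_def by auto
  show "concave_on {0<..} (tau_deriv \<tau>)" by (rule concave_on_cong'[OF c1]) (simp add: td)
  show "\<And>M. continuous_on {0..M} \<tau>"
  proof -
    fix M :: real
    show "continuous_on {0..M} \<tau>"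
      unfolding continuous_on_eq_continuous_within
    proof
      fix x assume x: "x \<in> {0..M}"
      show "continuous (at x within {0..M}) \<tau>"
      proof (cases "x = 0")
        case False
        then have "x > 0" using x by simp
        then have "isCont \<tau> x" using der DERIV_isCont by blast
        then show ?thesis by (simp add: continuous_at_imp_continuous_at_within)
      next
        case True
        have up: "\<tau> z \<le> z * \<tau> 1" if "0 \<le> z" "z \<le> 1" for z
          using convex_onD[OF conv, of z 0 1] that z by simp
        have "(\<tau> \<longlongrightarrow> 0) (at 0 within {0..M})"
        proof (rule tendsto_sandwich[where f = "\<lambda>_. 0" and h = "\<lambda>z. z * \<tau> 1"])
          show "eventually (\<lambda>z. 0 \<le> \<tau> z) (at 0 within {0..M})"
            using mono[of 0] z by (auto simp: eventually_at_filter)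
          show "eventually (\<lambda>z. \<tau> z \<le> z * \<tau> 1) (at 0 within {0..M})"
            unfolding eventually_at using up by (intro exI[of _ 1]) (auto simp: dist_real_def)
          show "((\<lambda>z. z * \<tau> 1) \<longlongrightarrow> 0) (at 0 within {0..M})"
            by (intro tendsto_eq_intros) auto
        qed auto
        then show ?thesis using True z by (simp add: continuous_within)
      qed
    qed
  qed
qed

lemma tau_pw:
  fixes \<tau> :: "real \<Rightarrow> real"
  assumes S: "class_S0plus \<tau>"
    and ab: "0 \<le> a" "0 \<le> b" "0 \<le> s" "0 < D" "\<bar>a - b\<bar> \<le> D" "D \<le> a + b"
    and t: "0 \<le> t" "t \<le> 1"
    and hs: "s\<^sup>2 \<le> (1-t)*a\<^sup>2 + t*b\<^sup>2 - t*(1-t)*D\<^sup>2"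
  shows "\<tau> s \<le> (1-t)*\<tau> a + t*\<tau> b - t*(1-t)*(right_deriv (tau_deriv \<tau>) (max a b)/2)*D\<^sup>2"
    and "0 \<le> right_deriv (tau_deriv \<tau>) (max a b)"
proof -
  define M where "M = max a b"
  have M: "M > 0" using ab by (auto simp: M_def)
  define k where "k = right_deriv (tau_deriv \<tau>) M"
  have mono': "\<And>x y. 0<x \<Longrightarrow> x\<le>y \<Longrightarrow> tau_deriv \<tau> x \<le> tau_deriv \<tau> y"
    using tf_dmono[OF S] tf_td[OF S] by (metis order_less_le_trans)
  have rd1: "0 \<le> right_deriv (tau_deriv \<tau>) M"
    using rd_props(1)[of "tau_deriv \<tau>" M] tf_conc2[OF S] mono' M by blast
  have rd2: "\<And>x y. 0<x \<Longrightarrow> x<y \<Longrightarrow> y\<le>M \<Longrightarrow> right_deriv (tau_deriv \<tau>) M * (y - x) \<le> tau_deriv \<tau> y - tau_deriv \<tau> x"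
    using rd_props(2)[of "tau_deriv \<tau>" M] tf_conc2[OF S] mono' M by blast
  have k0: "0 \<le> k" using rd1 by (simp add: k_def)
  then show "0 \<le> right_deriv (tau_deriv \<tau>) (max a b)" by (simp add: k_def M_def)
  have kk: "k * (y - x) \<le> deriv \<tau> y - deriv \<tau> x" if "0<x" "x<y" "y\<le>M" for x y
    using rd2[OF that] tf_td[OF S] that unfolding k_def by simp
  have ge: "k * x \<le> deriv \<tau> x" if x: "0<x" "x\<le>M" for x
  proof (rule ccontr)
    assume "\<not> k * x \<le> deriv \<tau> x"
    then have lt: "deriv \<tau> x < k * x" by simp
    have dpos: "deriv \<tau> x > 0" using tf_pos[OF S] x by simp
    then have kpos: "k > 0" using lt x by (smt (verit) mult_nonpos_nonneg)
    define e where "e = min (x/2) ((k*x - deriv \<tau> x)/(2*k))"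
    have e: "0 < e" "e < x" using x lt kpos by (auto simp: e_def)
    have "k * (x - e) \<le> deriv \<tau> x - deriv \<tau> e" using kk[of e x] e x by simp
    moreover have "deriv \<tau> e > 0" using tf_pos[OF S] e by simp
    moreover have "k * e \<le> (k*x - deriv \<tau> x)/2"
      using kpos unfolding e_def by (simp add: min_def field_simps)
    ultimately show False using lt by (simp add: algebra_simps)
  qed
  define G where "G = (\<lambda>x. \<tau> x - k/2 * x\<^sup>2)"
  define G' where "G' = (\<lambda>x. deriv \<tau> x - k * x)"
  have Gd: "(G has_real_derivative G' x) (at x)" if "0 < x" for x
    unfolding G_def G'_def using tf_der[OF S that]
    by (auto intro!: derivative_eq_intros)
  have Gc: "continuous_on {0..M} G"
    unfolding G_def using tf_cont[OF S] by (intro continuous_intros) auto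
  have Gconv: "convex_on {0..M} G"
  proof (rule convex_on_Icc_derivI[OF Gc])
    show "(G has_real_derivative G' x) (at x)" if "0 < x" "x < M" for x using Gd that by simp
    show "G' x \<le> G' y" if "0 < x" "x \<le> y" "y < M" for x y
    proof (cases "x = y")
      case False
      then show ?thesis using kk[of x y] that by (simp add: G'_def algebra_simps)
    qed simp
  qed
  have Gmono: "G x \<le> G y" if "0 \<le> x" "x \<le> y" "y \<le> M" for x y
  proof (rule DERIV_nonneg_imp_increasing_open[OF that(2)])
    show "continuous_on {x..y} G" by (rule continuous_on_subset[OF Gc]) (use that in auto)
    fix z assume "x < z" "z < y"
    then show "\<exists>l. (G has_real_derivative l) (at z) \<and> 0 \<le> l"
      using Gd[of z] ge[of z] that by (auto simp: G'_def)
  qed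
  define xt where "xt = (1-t)*a + t*b"
  have xt0: "0 \<le> xt" using ab t by (simp add: xt_def)
  have xtM: "xt \<le> M"
  proof -
    have "(1-t)*a \<le> (1-t)*M" "t*b \<le> t*M" using t by (auto simp: M_def intro!: mult_left_mono)
    then show ?thesis by (simp add: xt_def algebra_simps)
  qed
  have sq: "(a-b)\<^sup>2 \<le> D\<^sup>2" using power_mono[OF ab(5) abs_ge_zero, of 2] by simp
  have e: "xt\<^sup>2 - ((1-t)*a\<^sup>2 + t*b\<^sup>2 - t*(1-t)*D\<^sup>2) = t*(1-t)*(D\<^sup>2 - (a-b)\<^sup>2)"
    by (simp add: xt_def power2_eq_square algebra_simps)
  have "t*(1-t)*(D\<^sup>2 - (a-b)\<^sup>2) \<ge> 0" using t sq by simp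
  then have "s\<^sup>2 \<le> xt\<^sup>2" using e hs by linarith
  then have sxt: "s \<le> xt" using power2_le_imp_le[OF _ xt0] by blast
  have "G s \<le> G xt" using Gmono[of s xt] ab sxt xtM by simp
  also have "G xt \<le> (1-t) * G a + t * G b"
    using convex_onD[OF Gconv, of t a b] t ab by (simp add: xt_def M_def)
  finally have Gs: "G s \<le> (1-t) * G a + t * G b" .
  have "k/2 * s\<^sup>2 \<le> k/2 * ((1-t)*a\<^sup>2 + t*b\<^sup>2 - t*(1-t)*D\<^sup>2)"
    using hs k0 by (intro mult_left_mono) auto
  then have "\<tau> s \<le> (1-t) * G a + t * G b + k/2 * ((1-t)*a\<^sup>2 + t*b\<^sup>2 - t*(1-t)*D\<^sup>2)"
    using Gs by (simp add: G_def)
  also have "\<dots> = (1-t)*\<tau> a + t*\<tau> b - t*(1-t)*(k/2)*D\<^sup>2"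
    unfolding G_def by (simp add: field_simps)
  finally show "\<tau> s \<le> (1-t)*\<tau> a + t*\<tau> b - t*(1-t)*(right_deriv (tau_deriv \<tau>) (max a b)/2)*D\<^sup>2"
    by (simp add: k_def M_def)
qed




lemma aux_lin: "(B::real) \<le> U \<Longrightarrow> Z \<le> C \<Longrightarrow> 1/2*A + 1/2*B - 1/4*C \<le> 1/2*A + 1/2*U - 1/4*Z"
  by linarith

lemma geod:
  fixes m q :: "'q::metric_space"
  assumes H: "hadamard_space TYPE('q)"
  shows "\<exists>p. \<forall>y. (dist y p)\<^sup>2 \<le> (1 - 1/2^n)*(dist y m)\<^sup>2 + (1/2^n)*(dist y q)\<^sup>2
              - (1/2^n)*(1 - 1/2^n)*(dist m q)\<^sup>2"
proof (induction n)
  case 0 show ?case by (intro exI[of _ q]) simp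
next
  case (Suc n)
  define t where "t = (1::real)/2^n"
  define D where "D = dist m q"
  from Suc obtain r where r: "\<And>y. (dist y r)\<^sup>2 \<le> (1-t)*(dist y m)\<^sup>2 + t*(dist y q)\<^sup>2 - t*(1-t)*D\<^sup>2"
    unfolding t_def D_def by blast
  from H obtain p where p: "\<And>z. (1/2)*(dist m z)\<^sup>2 + (1/2)*(dist r z)\<^sup>2 - (1/4)*(dist m r)\<^sup>2 \<ge> (dist z p)\<^sup>2"
    unfolding hadamard_space_def by blast
  have t: "0 < t" "t \<le> 1" by (auto simp: t_def)
  have "(dist q r)\<^sup>2 \<le> (1-t)*D\<^sup>2 - t*(1-t)*D\<^sup>2"
    using r[of q] by (simp add: D_def dist_commute)
  also have "\<dots> = (1-t)*(1-t)*D\<^sup>2" by (simp only: left_diff_distrib mult.assoc mult_1_left)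
  also have "\<dots> = ((1-t)*D)\<^sup>2" by (simp add: power2_eq_square mult_ac)
  finally have sqle: "(dist q r)\<^sup>2 \<le> ((1-t)*D)\<^sup>2" .
  have "dist q r \<le> (1-t)*D"
    using power2_le_imp_le[OF sqle] t by (simp add: D_def)
  moreover have "D \<le> dist m r + dist r q" unfolding D_def by (rule dist_triangle)
  ultimately have "t*D \<le> dist m r" by (simp add: dist_commute algebra_simps)
  then have tD: "(t*D)\<^sup>2 \<le> (dist m r)\<^sup>2"
    using power_mono[of "t*D" "dist m r" 2] t by (simp add: D_def)
  show ?case
  proof (intro exI[of _ p] allI)
    fix y
    have "(dist y p)\<^sup>2 \<le> (1/2)*(dist y m)\<^sup>2 + (1/2)*(dist y r)\<^sup>2 - (1/4)*(dist m r)\<^sup>2"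
      using p[of y] by (simp add: dist_commute)
    also have "\<dots> \<le> (1/2)*(dist y m)\<^sup>2 + (1/2)*((1-t)*(dist y m)\<^sup>2 + t*(dist y q)\<^sup>2 - t*(1-t)*D\<^sup>2) - (1/4)*(t*D)\<^sup>2"
      by (rule aux_lin[OF r[of y] tD])
    also have "\<dots> = (1 - t/2)*(dist y m)\<^sup>2 + (t/2)*(dist y q)\<^sup>2 - (t/2)*(1 - t/2)*D\<^sup>2"
      unfolding power2_eq_square by (simp add: field_simps)
    also have "t/2 = 1/2^Suc n" by (simp add: t_def)
    finally show "(dist y p)\<^sup>2 \<le> (1 - 1/2^Suc n)*(dist y m)\<^sup>2 + (1/2^Suc n)*(dist y q)\<^sup>2
              - (1/2^Suc n)*(1 - 1/2^Suc n)*(dist m q)\<^sup>2" by (simp add: D_def)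
  qed
qed

lemma tau_lip:
  fixes \<tau> :: "real \<Rightarrow> real"
  assumes S: "class_S0plus \<tau>" and rs: "0 \<le> r" "0 \<le> s" "\<bar>s - r\<bar> \<le> c"
  shows "\<bar>\<tau> s - \<tau> r\<bar> \<le> c * (3 * \<bar>tau_deriv \<tau> r\<bar> + deriv \<tau> (2*c))"
proof (cases "c = 0")
  case True
  then have "s = r" using rs by simp
  then show ?thesis using True by simp
next
  case False
  then have c: "c > 0" using rs by simp
  have K: "deriv \<tau> (2*c) > 0" using tf_pos[OF S] c by simp
  define w where "w = max s r"
  show ?thesis
  proof (cases "w = 0")
    case True
    then have "s = 0" "r = 0" using rs by (auto simp: w_def)
    then show ?thesis using c K by simp
  next
    case False
    then have w: "w > 0" using rs by (auto simp: w_def)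
    have dw: "deriv \<tau> w \<ge> 0" using tf_pos[OF S w] by simp
    have l1: "\<bar>\<tau> s - \<tau> r\<bar> \<le> deriv \<tau> w * \<bar>s - r\<bar>"
    proof (cases "s \<le> r")
      case True
      then have "w = r" by (simp add: w_def)
      then have "deriv \<tau> r * (s - r) \<le> \<tau> s - \<tau> r" "\<tau> s \<le> \<tau> r"
        using tf_tan[OF S, of r s] tf_mono[OF S, of s r] w rs True by auto
      then show ?thesis using \<open>w = r\<close> True by (simp add: abs_if algebra_simps)
    next
      case False
      then have "w = s" by (simp add: w_def)
      then have "deriv \<tau> s * (r - s) \<le> \<tau> r - \<tau> s" "\<tau> r \<le> \<tau> s"
        using tf_tan[OF S, of s r] tf_mono[OF S, of r s] w rs False by auto
      then show ?thesis using \<open>w = s\<close> False by (simp add: abs_if algebra_simps)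
    qed
    also have "\<dots> \<le> deriv \<tau> w * c" using dw rs by (intro mult_left_mono) auto
    also have "deriv \<tau> w \<le> deriv \<tau> (r + c)"
    proof -
      have "w \<le> r + c" using rs by (auto simp: w_def)
      then show ?thesis using tf_dmono[OF S w] by blast
    qed
    also have "deriv \<tau> (r + c) \<le> 3 * \<bar>tau_deriv \<tau> r\<bar> + deriv \<tau> (2*c)"
    proof (cases "r \<le> c")
      case True
      then have "deriv \<tau> (r + c) \<le> deriv \<tau> (2*c)" using tf_dmono[OF S, of "r+c" "2*c"] rs c by simp
      then show ?thesis by simp
    next
      case False
      then have r: "r > 0" "c < r" using c by auto
      have "(deriv \<tau> (r+c) - deriv \<tau> r)/((r+c) - r) \<le> (deriv \<tau> r - deriv \<tau> (r/2))/(r - r/2)"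
        using conc_slope(3)[OF tf_conc[OF S], of "r/2" "r+c" r] r c by simp
      then have "(deriv \<tau> (r+c) - deriv \<tau> r)/c \<le> (deriv \<tau> r - deriv \<tau> (r/2))/(r/2)" by simp
      also have "\<dots> \<le> deriv \<tau> r / (r/2)"
        using tf_pos[OF S, of "r/2"] r by (intro divide_right_mono) auto
      finally have "deriv \<tau> (r+c) - deriv \<tau> r \<le> c * (deriv \<tau> r / (r/2))"
        using c by (simp add: divide_le_eq mult.commute)
      also have "c * (deriv \<tau> r / (r/2)) \<le> r * (deriv \<tau> r / (r/2))"
        using r tf_pos[OF S, of r] by (intro mult_right_mono) auto
      also have "r * (deriv \<tau> r / (r/2)) = 2 * deriv \<tau> r" using r by simp
      finally have "deriv \<tau> (r+c) \<le> 3 * deriv \<tau> r" by simp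
      moreover have "tau_deriv \<tau> r = deriv \<tau> r" using tf_td[OF S r(1)] .
      ultimately show ?thesis using K tf_pos[OF S r(1)] by simp
    qed
    finally show ?thesis using c by (simp add: mult.commute)
  qed
qed

lemma integ_diff:
  fixes M :: "'w measure" and Y :: "'w \<Rightarrow> 'q::metric_space" and \<tau> :: "real \<Rightarrow> real"
  assumes P: "prob_space M" and Ym: "Y \<in> M \<rightarrow>\<^sub>M borel" and S: "class_S0plus \<tau>"
    and int: "integrable M (\<lambda>\<omega>. tau_deriv \<tau> (dist (Y \<omega>) x0))"
  shows "integrable M (\<lambda>\<omega>. \<tau> (dist (Y \<omega>) p) - \<tau> (dist (Y \<omega>) x0))"
proof -
  interpret prob_space M by (rule P)
  have tm: "(\<lambda>x. \<tau> (max 0 x)) \<in> borel_measurable borel"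
    by (rule borel_measurable_mono) (auto simp: mono_def intro!: tf_mono[OF S])
  have dm: "(\<lambda>\<omega>. dist (Y \<omega>) z) \<in> borel_measurable M" for z
    by (rule measurable_compose[OF Ym borel_measurable_continuous_onI]) (intro continuous_intros)
  have tdm: "(\<lambda>\<omega>. \<tau> (dist (Y \<omega>) z)) \<in> borel_measurable M" for z
    using measurable_compose[OF dm tm] by simp
  define c where "c = dist p x0"
    have i1: "integrable M (\<lambda>\<omega>. c * (3 * \<bar>tau_deriv \<tau> (dist (Y \<omega>) x0)\<bar> + deriv \<tau> (2*c)))"
      using int by (intro integrable_mult_right Bochner_Integration.integrable_add integrable_abs) auto
    have m1: "(\<lambda>\<omega>. \<tau> (dist (Y \<omega>) p) - \<tau> (dist (Y \<omega>) x0)) \<in> borel_measurable M"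
      using tdm by measurable
    have ae: "AE \<omega> in M. norm (\<tau> (dist (Y \<omega>) p) - \<tau> (dist (Y \<omega>) x0))
       \<le> norm (c * (3 * \<bar>tau_deriv \<tau> (dist (Y \<omega>) x0)\<bar> + deriv \<tau> (2*c)))"
    proof (rule AE_I2)
      fix \<omega>
      have "\<bar>dist (Y \<omega>) p - dist (Y \<omega>) x0\<bar> \<le> c"
        unfolding c_def by (metis dist_commute dist_triangle3 abs_diff_le_iff diff_le_eq add.commute)
      then have "\<bar>\<tau> (dist (Y \<omega>) p) - \<tau> (dist (Y \<omega>) x0)\<bar> \<le> c * (3 * \<bar>tau_deriv \<tau> (dist (Y \<omega>) x0)\<bar> + deriv \<tau> (2*c))"
        by (intro tau_lip[OF S]) auto
      also have "\<dots> \<le> \<bar>c * (3 * \<bar>tau_deriv \<tau> (dist (Y \<omega>) x0)\<bar> + deriv \<tau> (2*c))\<bar>" by simp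
      finally show "norm (\<tau> (dist (Y \<omega>) p) - \<tau> (dist (Y \<omega>) x0))
       \<le> norm (c * (3 * \<bar>tau_deriv \<tau> (dist (Y \<omega>) x0)\<bar> + deriv \<tau> (2*c)))" by simp
    qed
    show ?thesis by (rule Bochner_Integration.integrable_bound[OF i1 m1 ae])
qed

theorem mainTheorem1:
  fixes M :: "'w measure" and Y :: "'w \<Rightarrow> 'q::metric_space"
    and x0 m q :: 'q and \<tau> :: "real \<Rightarrow> real"
  assumes "hadamard_space TYPE('q)"
    and "prob_space M"
    and "Y \<in> M \<rightarrow>\<^sub>M borel"
    and "class_S0plus \<tau>"
    and "integrable M (\<lambda>\<omega>. tau_deriv \<tau> (dist (Y \<omega>) x0))"
    and "\<forall>p. (\<integral>\<omega>. \<tau> (dist (Y \<omega>) m) - \<tau> (dist (Y \<omega>) x0) \<partial>M)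
               \<le> (\<integral>\<omega>. \<tau> (dist (Y \<omega>) p) - \<tau> (dist (Y \<omega>) x0) \<partial>M)"
    and "q \<noteq> m"
  shows "(\<integral>\<omega>. \<tau> (dist (Y \<omega>) q) - \<tau> (dist (Y \<omega>) m) \<partial>M)
         \<ge> (1/2) * (dist q m)\<^sup>2 *
           (\<integral>\<omega>. right_deriv (tau_deriv \<tau>) (max (dist (Y \<omega>) m) (dist (Y \<omega>) q)) \<partial>M)"
proof -
  note H = assms(1) and P = assms(2) and Ym = assms(3) and S = assms(4) and int = assms(5)
    and amin = assms(6)
  define D where "D = dist q m"
  have D: "D > 0" using assms(7) by (simp add: D_def)
  define k where "k = (\<lambda>\<omega>. right_deriv (tau_deriv \<tau>) (max (dist (Y \<omega>) m) (dist (Y \<omega>) q)))"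
  define F where "F = (\<lambda>\<omega>. \<tau> (dist (Y \<omega>) q) - \<tau> (dist (Y \<omega>) m))"
  have Iint: "integrable M (\<lambda>\<omega>. \<tau> (dist (Y \<omega>) p) - \<tau> (dist (Y \<omega>) x0))" for p
    by (rule integ_diff[OF P Ym S int])
  have Fint: "integrable M F"
  proof -
    have "integrable M (\<lambda>\<omega>. (\<tau> (dist (Y \<omega>) q) - \<tau> (dist (Y \<omega>) x0)) - (\<tau> (dist (Y \<omega>) m) - \<tau> (dist (Y \<omega>) x0)))"
      by (rule Bochner_Integration.integrable_diff[OF Iint Iint])
    then show ?thesis unfolding F_def by simp
  qed
  have geo: "\<bar>a - b\<bar> \<le> D" "D \<le> a + b" if "a = dist y m" "b = dist y q" for a b y
    using that unfolding D_def
    by (metis abs_diff_le_iff dist_commute dist_triangle dist_triangle3 diff_le_eq add.commute)+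
  have pw: "\<tau> (dist (Y \<omega>) p) - \<tau> (dist (Y \<omega>) m) \<le> t * F \<omega> - t*(1-t)*(D\<^sup>2/2) * k \<omega>"
    and k0: "0 \<le> k \<omega>"
    if t: "0 \<le> t" "t \<le> 1"
      and hp: "\<And>y. (dist y p)\<^sup>2 \<le> (1 - t)*(dist y m)\<^sup>2 + t*(dist y q)\<^sup>2 - t*(1 - t)*(dist m q)\<^sup>2"
    for \<omega> p t
  proof -
    have g: "\<bar>dist (Y \<omega>) m - dist (Y \<omega>) q\<bar> \<le> D" "D \<le> dist (Y \<omega>) m + dist (Y \<omega>) q"
      using geo by auto
    have hs: "(dist (Y \<omega>) p)\<^sup>2 \<le> (1-t)*(dist (Y \<omega>) m)\<^sup>2 + t*(dist (Y \<omega>) q)\<^sup>2 - t*(1-t)*D\<^sup>2"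
      using hp[of "Y \<omega>"] by (simp add: D_def dist_commute)
    note tp = tau_pw[OF S _ _ _ D g t hs]
    show "0 \<le> k \<omega>" using tp(2) by (simp add: k_def)
    show "\<tau> (dist (Y \<omega>) p) - \<tau> (dist (Y \<omega>) m) \<le> t * F \<omega> - t*(1-t)*(D\<^sup>2/2) * k \<omega>"
      using tp(1) by (simp add: k_def F_def algebra_simps)
  qed
  have kk: "0 \<le> k \<omega>" for \<omega> by (rule k0[of 1 q \<omega>]) auto
  have kge: "0 \<le> integral\<^sup>L M k" using kk by (simp add: Bochner_Integration.integral_nonneg)
  have main: "(1 - 1/2^n) * (D\<^sup>2/2 * integral\<^sup>L M k) \<le> integral\<^sup>L M F"
    if ki: "integrable M k" for n :: nat
  proof -
    define t :: real where "t = 1/2^n"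
    have t: "0 < t" "t \<le> 1" by (auto simp: t_def)
    obtain p where hp: "\<forall>y. (dist y p)\<^sup>2 \<le> (1 - t)*(dist y m)\<^sup>2 + t*(dist y q)\<^sup>2
              - t*(1 - t)*(dist m q)\<^sup>2"
      using geod[OF H, of n m q] unfolding t_def by blast
    have "0 \<le> (\<integral>\<omega>. \<tau> (dist (Y \<omega>) p) - \<tau> (dist (Y \<omega>) x0) \<partial>M) - (\<integral>\<omega>. \<tau> (dist (Y \<omega>) m) - \<tau> (dist (Y \<omega>) x0) \<partial>M)"
      using amin by simp
    also have "\<dots> = (\<integral>\<omega>. (\<tau> (dist (Y \<omega>) p) - \<tau> (dist (Y \<omega>) x0)) - (\<tau> (dist (Y \<omega>) m) - \<tau> (dist (Y \<omega>) x0)) \<partial>M)"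
      by (rule Bochner_Integration.integral_diff[symmetric, OF Iint Iint])
    also have "\<dots> = (\<integral>\<omega>. \<tau> (dist (Y \<omega>) p) - \<tau> (dist (Y \<omega>) m) \<partial>M)" by simp
    also have "\<dots> \<le> (\<integral>\<omega>. t * F \<omega> - t*(1-t)*(D\<^sup>2/2) * k \<omega> \<partial>M)"
    proof (rule integral_mono)
      have "integrable M (\<lambda>\<omega>. (\<tau> (dist (Y \<omega>) p) - \<tau> (dist (Y \<omega>) x0)) - (\<tau> (dist (Y \<omega>) m) - \<tau> (dist (Y \<omega>) x0)))"
        by (rule Bochner_Integration.integrable_diff[OF Iint Iint])
      then show "integrable M (\<lambda>\<omega>. \<tau> (dist (Y \<omega>) p) - \<tau> (dist (Y \<omega>) m))" by simp
      show "integrable M (\<lambda>\<omega>. t * F \<omega> - t*(1-t)*(D\<^sup>2/2) * k \<omega>)"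
        by (rule Bochner_Integration.integrable_diff[OF integrable_mult_right[OF Fint] integrable_mult_right[OF ki]])
      show "\<tau> (dist (Y \<omega>) p) - \<tau> (dist (Y \<omega>) m) \<le> t * F \<omega> - t*(1-t)*(D\<^sup>2/2) * k \<omega>" for \<omega>
        using pw[of t p \<omega>] t hp by auto
    qed
    also have "\<dots> = t * integral\<^sup>L M F - t*(1-t)*(D\<^sup>2/2) * integral\<^sup>L M k"
      using Fint ki by (simp add: Bochner_Integration.integral_diff integrable_mult_right)
    finally have "t * ((1-t)*(D\<^sup>2/2 * integral\<^sup>L M k)) \<le> t * integral\<^sup>L M F"
      by (simp add: algebra_simps)
    then have "(1-t)*(D\<^sup>2/2 * integral\<^sup>L M k) \<le> integral\<^sup>L M F"
      using mult_le_cancel_left_pos[OF t(1)] by blast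
    then show ?thesis by (simp only: t_def)
  qed
  show ?thesis
  proof (cases "integrable M k")
    case True
    define X where "X = D\<^sup>2/2 * integral\<^sup>L M k"
    have X0: "0 \<le> X" using kge by (simp add: X_def)
    have Xn: "(1 - (1/2)^n) * X \<le> integral\<^sup>L M F" for n
      using main[OF True, of n] by (simp add: X_def power_one_over)
    have "X \<le> integral\<^sup>L M F"
    proof (rule ccontr)
      assume "\<not> X \<le> integral\<^sup>L M F"
      then have lt: "integral\<^sup>L M F < X" by simp
      then have Xp: "X > 0" using X0 Xn[of 0] by simp
      obtain n where n: "(1/2::real)^n < (X - integral\<^sup>L M F) / X"
        using real_arch_pow_inv[of "(X - integral\<^sup>L M F) / X" "1/2"] lt Xp by auto
      then have "(1/2)^n * X < X - integral\<^sup>L M F" using Xp by (simp add: less_divide_eq)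
      then show False using Xn[of n] by (simp add: algebra_simps)
    qed
    then show ?thesis by (simp add: X_def D_def k_def F_def mult.assoc)
  next
    case False
    then have k0i: "integral\<^sup>L M k = 0" by (rule not_integrable_integral_eq)
    obtain p where hp: "\<forall>y. (dist y p)\<^sup>2 \<le> (1 - 1/2)*(dist y m)\<^sup>2 + (1/2)*(dist y q)\<^sup>2
              - (1/2)*(1 - 1/2)*(dist m q)\<^sup>2"
      using geod[OF H, of 1 m q] by auto
    have "0 \<le> (\<integral>\<omega>. \<tau> (dist (Y \<omega>) p) - \<tau> (dist (Y \<omega>) x0) \<partial>M) - (\<integral>\<omega>. \<tau> (dist (Y \<omega>) m) - \<tau> (dist (Y \<omega>) x0) \<partial>M)"
      using amin by simp
    also have "\<dots> = (\<integral>\<omega>. (\<tau> (dist (Y \<omega>) p) - \<tau> (dist (Y \<omega>) x0)) - (\<tau> (dist (Y \<omega>) m) - \<tau> (dist (Y \<omega>) x0)) \<partial>M)"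
      by (rule Bochner_Integration.integral_diff[symmetric, OF Iint Iint])
    also have "\<dots> = (\<integral>\<omega>. \<tau> (dist (Y \<omega>) p) - \<tau> (dist (Y \<omega>) m) \<partial>M)" by simp
    also have "\<dots> \<le> (\<integral>\<omega>. (1/2) * F \<omega> \<partial>M)"
    proof (rule integral_mono)
      have "integrable M (\<lambda>\<omega>. (\<tau> (dist (Y \<omega>) p) - \<tau> (dist (Y \<omega>) x0)) - (\<tau> (dist (Y \<omega>) m) - \<tau> (dist (Y \<omega>) x0)))"
        by (rule Bochner_Integration.integrable_diff[OF Iint Iint])
      then show "integrable M (\<lambda>\<omega>. \<tau> (dist (Y \<omega>) p) - \<tau> (dist (Y \<omega>) m))" by simp
      show "integrable M (\<lambda>\<omega>. (1/2) * F \<omega>)"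
        using Fint by (rule integrable_mult_right)
      show "\<tau> (dist (Y \<omega>) p) - \<tau> (dist (Y \<omega>) m) \<le> (1/2) * F \<omega>" for \<omega>
      proof -
        have "\<tau> (dist (Y \<omega>) p) - \<tau> (dist (Y \<omega>) m) \<le> (1/2) * F \<omega> - (1/2)*(1-1/2)*(D\<^sup>2/2) * k \<omega>"
          using pw[of "1/2" p \<omega>] hp by auto
        moreover have "0 \<le> (1/2)*(1-1/2)*(D\<^sup>2/2) * k \<omega>" using k0[of "1/2" p \<omega>] hp by auto
        ultimately show ?thesis by linarith
      qed
    qed
    also have "\<dots> = (1/2) * integral\<^sup>L M F" by simp
    finally show ?thesis using k0i by (simp add: k_def F_def)
  qed
qed


end
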